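(* Let $A_h,B\in\mathcal L(\mathbb R^{N\times N}_s)$ be symmetric positive tensors and $\gamma>0$ such that $\gamma A_h-B$ is positive. Let $S(t)=-Be^{-\gamma t}$, $t\geq0$, and $LS(z)=\int_0^\infty e^{-zt}S(t)dt$ its Laplace transform. Then there exists $c>0$ such that for all $z\in\mathbb C$ with $\mathrm{Re}(z)>0$ and all $\xi\in\mathbb C^{N\times N}_s$, $$\mathrm{Re}\big((A_h+LS(z))\xi:\overline{z\xi}\big)\geq c\Big(\mathrm{Re}(z)+\frac{|z|^2}{1+|z|^2}\Big)|\xi|^2,\qquad \mathrm{Im}\big((A_h+LS(z))\xi:\overline{z\xi}\big)\,\mathrm{Im}(z)\leq-c|\mathrm{Im}(z)|^2|\xi|^2.$$
   Context: $\xi:\eta=\sum_{ij}\xi_{ij}\eta_{ij}$ (bilinear, no conjugation); $\mathbb C^{N\times N}_s$ denotes complex symmetric matrices and tensors in $\mathcal L(\mathbb R^{N\times N}_s)$ are extended complex-linearly. A tensor $M$ is positive if $M\xi:\xi>0$ for $\xi\neq0$ real symmetric. *)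

theory Defs
  imports "HOL-Analysis.Analysis"
begin

text \<open>N x N matrices are indexed by a finite type 'n (N = CARD('n)).
  A tensor in L(R^{NxN}_s) is represented by a linear map on real^'n^'n that maps
  symmetric matrices to symmetric matrices; only its values on symmetric matrices matter.\<close>

definition sym_mat :: "'a^'n^'n \<Rightarrow> bool" where
  "sym_mat X \<longleftrightarrow> (\<forall>i j. X$i$j = X$j$i)"

text \<open>Double contraction xi : eta = sum_ij xi_ij eta_ij (bilinear, no conjugation).\<close>
definition ddot :: "'a::comm_ring_1^'n::finite^'n \<Rightarrow> 'a^'n^'n \<Rightarrow> 'a" (infixl ":::" 70) where
  "ddot X Y = (\<Sum>i\<in>UNIV. \<Sum>j\<in>UNIV. X$i$j * Y$i$j)"

definition is_tensor :: "(real^'n^'n \<Rightarrow> real^'n^'n) \<Rightarrow> bool" where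
  "is_tensor M \<longleftrightarrow> linear M \<and> (\<forall>X. sym_mat X \<longrightarrow> sym_mat (M X))"

definition sym_tensor :: "(real^'n::finite^'n \<Rightarrow> real^'n^'n) \<Rightarrow> bool" where
  "sym_tensor M \<longleftrightarrow> (\<forall>X Y. sym_mat X \<longrightarrow> sym_mat Y \<longrightarrow> (M X) ::: Y = X ::: (M Y))"

definition positive_tensor :: "(real^'n::finite^'n \<Rightarrow> real^'n^'n) \<Rightarrow> bool" where
  "positive_tensor M \<longleftrightarrow> (\<forall>X. sym_mat X \<longrightarrow> X \<noteq> 0 \<longrightarrow> (M X) ::: X > 0)"

definition mRe :: "complex^'n^'n \<Rightarrow> real^'n^'n" where
  "mRe X = (\<chi> i j. Re (X$i$j))"

definition mIm :: "complex^'n^'n \<Rightarrow> real^'n^'n" where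
  "mIm X = (\<chi> i j. Im (X$i$j))"

definition mcnj :: "complex^'n^'n \<Rightarrow> complex^'n^'n" where
  "mcnj X = (\<chi> i j. cnj (X$i$j))"

definition mscale :: "complex \<Rightarrow> complex^'n^'n \<Rightarrow> complex^'n^'n" where
  "mscale z X = (\<chi> i j. z * X$i$j)"

definition cext :: "(real^'n^'n \<Rightarrow> real^'n^'n) \<Rightarrow> complex^'n^'n \<Rightarrow> complex^'n^'n" where
  "cext M X = (\<chi> i j. Complex ((M (mRe X))$i$j) ((M (mIm X))$i$j))"

definition laplace_tensor :: "(real \<Rightarrow> real^'n^'n \<Rightarrow> real^'n^'n) \<Rightarrow> complex \<Rightarrow> complex^'n^'n \<Rightarrow> complex^'n^'n" where
  "laplace_tensor S z X = (\<chi> i j. integral {0..} (\<lambda>t. exp (- z * complex_of_real t) * (cext (S t) X)$i$j))"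

end

theory Submission
  imports Defs "HOL-Real_Asymp.Real_Asymp"
begin


lemma exp_int_fin:
  fixes w :: complex assumes "w \<noteq> 0" "0 \<le> b"
  shows "((\<lambda>t. exp (- w * complex_of_real t)) has_integral (1 - exp (- w * of_real b)) / w) {0..b}"
proof -
  have d: "((\<lambda>u. - exp (- w * u) / w) has_field_derivative exp (- w * of_real x)) (at (of_real x))" for x :: real
    using assms by (auto intro!: derivative_eq_intros simp: field_simps)
  have "((\<lambda>t. exp (- w * complex_of_real t)) has_integral
     ((- exp (- w * of_real b) / w) - (- exp (- w * of_real 0) / w))) {0..b}"
    using assms
    by (intro fundamental_theorem_of_calculus has_vector_derivative_real_field[OF d]) auto
  moreover have "(1 - exp (- w * of_real b)) / w = (- exp (- w * of_real b) / w) - (- exp (- w * of_real 0) / w)" by (simp add: diff_divide_distrib)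
  ultimately show ?thesis by simp
qed



lemma exp_int_inf:
  fixes w :: complex assumes w: "Re w > 0"
  shows "((\<lambda>t. exp (- w * complex_of_real t)) has_integral 1 / w) {0..}"
proof (rule has_integral_dominated_convergence)
  have w0: "w \<noteq> 0" using w by auto
  show "((\<lambda>t. if t \<in> {0..real k} then exp (- w * complex_of_real t) else 0) has_integral
          (1 - exp (- w * of_real (real k))) / w) {0..}" for k
    by (subst has_integral_restrict) (use exp_int_fin[OF w0, of "real k"] in auto)
  show "(\<lambda>t. exp (- Re w * t)) integrable_on {0..}"
    using integrable_on_exp_minus_to_infinity[OF w] .
  show "\<forall>x\<in>{0..}. norm (if x \<in> {0..real k} then exp (- w * complex_of_real x) else 0) \<le> exp (- Re w * x)" for k
    by (auto simp: norm_exp_eq_Re)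
  show "\<forall>x\<in>{0..}. (\<lambda>k. if x \<in> {0..real k} then exp (- w * complex_of_real x) else 0) \<longlonglongrightarrow> exp (- w * complex_of_real x)"
  proof
    fix x :: real assume "x \<in> {0..}"
    have "eventually (\<lambda>k. real k \<ge> x) sequentially"
      by (meson eventually_sequentiallyI nat_ceiling_le_eq)
    then have "eventually (\<lambda>k. (if x \<in> {0..real k} then exp (- w * complex_of_real x) else 0) = exp (- w * complex_of_real x)) sequentially"
      using \<open>x \<in> {0..}\<close> by (auto elim!: eventually_mono)
    then show "(\<lambda>k. if x \<in> {0..real k} then exp (- w * complex_of_real x) else 0) \<longlonglongrightarrow> exp (- w * complex_of_real x)"
      by (rule tendsto_eventually)
  qed
  have "(\<lambda>k. exp (- Re w * real k)) \<longlonglongrightarrow> 0"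
    using w by real_asymp
  have "(\<lambda>k. exp (- w * complex_of_real (real k))) \<longlonglongrightarrow> 0"
  proof (rule tendsto_norm_zero_cancel)
    have "norm (exp (- w * complex_of_real (real k))) = exp (- Re w * real k)" for k
      by (simp add: norm_exp_eq_Re)
    note nrm = this
    show "(\<lambda>k. norm (exp (- w * complex_of_real (real k)))) \<longlonglongrightarrow> 0"
      unfolding nrm by (rule \<open>(\<lambda>k. exp (- Re w * real k)) \<longlonglongrightarrow> 0\<close>)
  qed
  then have "(\<lambda>k. (1 - exp (- w * complex_of_real (real k))) / w) \<longlonglongrightarrow> (1 - 0) / w"
    using w0 by (intro tendsto_intros) auto
  then show "(\<lambda>k. (1 - exp (- w * complex_of_real (real k))) / w) \<longlonglongrightarrow> 1 / w" by simp
qed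



lemma ddot_real: "(X::real^'n::finite^'n) ::: Y = inner X Y"
  by (simp add: ddot_def inner_vec_def)

lemma closed_sym: "closed {X::real^'n::finite^'n. sym_mat X}"
proof -
  have "{X::real^'n::finite^'n. sym_mat X} = (\<Inter>i. \<Inter>j. {X. X$i$j = X$j$i})"
    by (auto simp: sym_mat_def)
  also have "closed \<dots>"
    by (intro closed_INT ballI closed_Collect_eq continuous_intros)
  finally show ?thesis .
qed

lemma sym_scale: "sym_mat X \<Longrightarrow> sym_mat (c *\<^sub>R (X::real^'n::finite^'n))"
  by (simp add: sym_mat_def)

lemma coercive:
  fixes M :: "real^'n::finite^'n \<Rightarrow> real^'n^'n"
  assumes lin: "linear M" and pos: "positive_tensor M"
  shows "\<exists>\<alpha>>0. \<forall>X. sym_mat X \<longrightarrow> \<alpha> * (norm X)\<^sup>2 \<le> inner (M X) X"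
proof -
  define K where "K = {X::real^'n^'n. sym_mat X} \<inter> sphere 0 1"
  define f where "f = (\<lambda>X. inner (M X) X)"
  have bl: "bounded_linear M" using lin by (simp add: linear_conv_bounded_linear)
  have cont: "continuous_on K f"
    unfolding f_def
    by (intro continuous_intros linear_continuous_on bl)
  have cK: "compact K" unfolding K_def
    by (intro closed_Int_compact closed_sym compact_sphere)
  have scal: "f (c *\<^sub>R X) = c\<^sup>2 * f X" for c X
    unfolding f_def using linear_cmul[OF lin] by (simp add: power2_eq_square)
  have pos': "sym_mat X \<Longrightarrow> X \<noteq> 0 \<Longrightarrow> f X > 0" for X
    using pos unfolding positive_tensor_def f_def by (simp add: ddot_real)
  have decomp: "sym_mat X \<Longrightarrow> X \<noteq> 0 \<Longrightarrow> (X /\<^sub>R norm X) \<in> K \<and> X = norm X *\<^sub>R (X /\<^sub>R norm X)" for X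
    unfolding K_def by (auto simp: sym_scale)
  show ?thesis
  proof (cases "K = {}")
    case True
    then have "sym_mat X \<Longrightarrow> X = 0" for X :: "real^'n^'n" using decomp[of X] by auto
    then show ?thesis using linear_0[OF lin] by (intro exI[of _ 1]) (auto, metis inner_zero_right norm_zero order_refl power2_eq_square mult_zero_left)
  next
    case False
    then obtain X0 where X0: "X0 \<in> K" "\<And>X. X \<in> K \<Longrightarrow> f X0 \<le> f X"
      using continuous_attains_inf[OF cK False cont] by blast
    have a0: "f X0 > 0" using X0(1) pos'[of X0] unfolding K_def by fastforce
    show ?thesis
    proof (intro exI[of _ "f X0"] conjI allI impI a0)
      fix X :: "real^'n^'n" assume sX: "sym_mat X"
      show "f X0 * (norm X)\<^sup>2 \<le> inner (M X) X"
      proof (cases "X = 0")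
        case True then show ?thesis using linear_0[OF lin] by simp
      next
        case False
        then have d: "X /\<^sub>R norm X \<in> K" "X = norm X *\<^sub>R (X /\<^sub>R norm X)" using decomp sX by auto
        have "f X = (norm X)\<^sup>2 * f (X /\<^sub>R norm X)" by (subst d(2)) (rule scal)
        moreover have "f X0 \<le> f (X /\<^sub>R norm X)" using X0(2) d(1) by blast
        ultimately have "f X0 * (norm X)\<^sup>2 \<le> f X" by (metis mult.commute mult_left_mono zero_le_power2)
        then show ?thesis by (simp add: f_def)
      qed
    qed
  qed
qed



lemma sym_mRe: "sym_mat \<xi> \<Longrightarrow> sym_mat (mRe \<xi>)"
  by (simp add: sym_mat_def mRe_def)
lemma sym_mIm: "sym_mat \<xi> \<Longrightarrow> sym_mat (mIm \<xi>)"
  by (simp add: sym_mat_def mIm_def)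

lemma ddot_add: "((U::complex^'n::finite^'n) + V) ::: W = U ::: W + V ::: W"
  by (simp add: ddot_def distrib_right sum.distrib)

lemma ddot_scale: "(\<chi> i j. c * (U::complex^'n::finite^'n)$i$j) ::: W = c * (U ::: W)"
  by (simp add: ddot_def sum_distrib_left mult.assoc)

lemma ddot_mscale: "U ::: mcnj (mscale w (\<xi>::complex^'n::finite^'n)) = cnj w * (U ::: mcnj \<xi>)"
  by (simp add: ddot_def mcnj_def mscale_def sum_distrib_left mult_ac)

lemma norm_cmat: "(norm (\<xi>::complex^'n::finite^'n))\<^sup>2 = (norm (mRe \<xi>))\<^sup>2 + (norm (mIm \<xi>))\<^sup>2"
  by (simp add: power2_norm_eq_inner inner_vec_def inner_complex_def mRe_def mIm_def sum.distrib)

lemma cform: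
  fixes A :: "real^'n::finite^'n \<Rightarrow> real^'n^'n"
  assumes sA: "sym_tensor A" and s: "sym_mat \<xi>"
  shows "cext A \<xi> ::: mcnj \<xi> = complex_of_real (inner (A (mRe \<xi>)) (mRe \<xi>) + inner (A (mIm \<xi>)) (mIm \<xi>))"
proof -
  let ?X = "mRe \<xi>" and ?Y = "mIm \<xi>"
  have e: "cext A \<xi> ::: mcnj \<xi> = Complex (inner (A ?X) ?X + inner (A ?Y) ?Y) (inner (A ?Y) ?X - inner (A ?X) ?Y)"
    by (simp add: complex_eq_iff ddot_def cext_def mcnj_def Re_sum Im_sum inner_vec_def
        mRe_def mIm_def sum.distrib sum_subtractf algebra_simps)
  have "inner (A ?X) ?Y = inner ?X (A ?Y)"
    using sA sym_mRe[OF s] sym_mIm[OF s] unfolding sym_tensor_def by (simp add: ddot_real)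
  then have "inner (A ?Y) ?X - inner (A ?X) ?Y = 0" by (simp add: inner_commute)
  with e show ?thesis by (simp add: complex_of_real_def)
qed



lemma laplace_eq:
  fixes B :: "real^'n::finite^'n \<Rightarrow> real^'n^'n"
  assumes z: "Re z > 0" and g: "\<gamma> > 0"
  shows "laplace_tensor (\<lambda>t X. - (exp (- \<gamma> * t) *\<^sub>R B X)) z \<xi>
       = (\<chi> i j. (- 1 / (z + of_real \<gamma>)) * (cext B \<xi>)$i$j)"
proof -
  have w: "Re (z + of_real \<gamma>) > 0" using z g by simp
  have ent: "exp (- z * complex_of_real t) * (cext (\<lambda>X. - (exp (- \<gamma> * t) *\<^sub>R B X)) \<xi>)$i$j
        = - (cext B \<xi>)$i$j * exp (- (z + of_real \<gamma>) * complex_of_real t)" for t i j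
  proof -
    have "(cext (\<lambda>X. - (exp (- \<gamma> * t) *\<^sub>R B X)) \<xi>)$i$j = - complex_of_real (exp (- \<gamma> * t)) * (cext B \<xi>)$i$j"
      unfolding cext_def by (simp add: Complex_eq algebra_simps)
    note h1 = this
    have "exp (- z * complex_of_real t) * complex_of_real (exp (- \<gamma> * t)) = exp (- (z + of_real \<gamma>) * complex_of_real t)"
    proof -
      have "complex_of_real (exp (- \<gamma> * t)) = exp (complex_of_real (- \<gamma> * t))"
        by (rule exp_of_real[symmetric])
      then have "exp (- z * complex_of_real t) * complex_of_real (exp (- \<gamma> * t))
          = exp (- z * complex_of_real t + complex_of_real (- \<gamma> * t))"
        by (simp only: exp_add)
      also have "- z * complex_of_real t + complex_of_real (- \<gamma> * t) = - (z + of_real \<gamma>) * complex_of_real t"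
        by (simp add: algebra_simps)
      finally show ?thesis .
    qed
    note h2 = this
    have "exp (- z * complex_of_real t) * (- complex_of_real (exp (- \<gamma> * t)) * (cext B \<xi>)$i$j)
        = - (cext B \<xi>)$i$j * (exp (- z * complex_of_real t) * complex_of_real (exp (- \<gamma> * t)))"
      by (simp only: mult_ac mult_minus_left mult_minus_right)
    then show ?thesis unfolding h1 h2 .
  qed
  have "integral {0..} (\<lambda>t. - (cext B \<xi>)$i$j * exp (- (z + of_real \<gamma>) * complex_of_real t))
        = - (cext B \<xi>)$i$j * (1 / (z + of_real \<gamma>))" for i j
    using has_integral_mult_right[OF exp_int_inf[OF w]] by (rule integral_unique)
  then show ?thesis
    unfolding laplace_tensor_def ent by (simp add: vec_eq_iff)
qed



lemma re_ineq:
  fixes x y a b n \<alpha> \<beta> \<delta> \<gamma> c m K D :: real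
  assumes x: "x > 0" and g: "\<gamma> > 0" and al: "\<alpha> > 0" and be: "\<beta> > 0" and de: "\<delta> > 0"
    and n: "n \<ge> 0" and ha: "a \<ge> \<alpha> * n" and hb: "b \<ge> \<beta> * n" and hd: "\<gamma> * a - b \<ge> \<delta> * n"
    and mdef: "m = min \<alpha> (\<delta> / \<gamma>)" and Kdef: "K = max 1 (\<gamma>\<^sup>2)"
    and c1: "c \<le> m / 2" and c2: "c \<le> \<beta> / (2 * K)" and c0: "c > 0"
    and Ddef: "D = (x + \<gamma>)\<^sup>2 + y\<^sup>2"
  shows "c * (x + (x\<^sup>2 + y\<^sup>2) / (1 + (x\<^sup>2 + y\<^sup>2))) * n \<le> x * a - b * (x * (x + \<gamma>) - y\<^sup>2) / D"
proof -
  have D0: "D > 0" using Ddef x g by (simp add: add_pos_nonneg)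
  have m0: "m > 0" using mdef al de g by simp
  have K1: "K \<ge> 1" "K \<ge> \<gamma>\<^sup>2" using Kdef by auto
  have mal: "m \<le> \<alpha>" and mde: "m * \<gamma> \<le> \<delta>" using mdef g by (auto simp: min_def field_simps)
  have e1: "a * D - b * (x + \<gamma>) = (x + \<gamma>) * (a * x + (\<gamma> * a - b)) + a * y\<^sup>2"
    using Ddef by (simp add: algebra_simps power2_eq_square)
  have "a * x + (\<gamma> * a - b) \<ge> \<alpha> * n * x + \<delta> * n"
    using ha hd x by (intro add_mono mult_right_mono) auto
  moreover have "\<alpha> * n * x + \<delta> * n \<ge> m * n * (x + \<gamma>)"
  proof -
    have "m * n * x \<le> \<alpha> * n * x" using mal n x by (intro mult_right_mono mult_right_mono) auto
    moreover have "m * n * \<gamma> \<le> \<delta> * n" using mde n by (metis mult.commute mult.left_commute mult_right_mono)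
    ultimately show ?thesis by (simp add: algebra_simps)
  qed
  ultimately have "a * x + (\<gamma> * a - b) \<ge> m * n * (x + \<gamma>)" by linarith
  then have t1: "(x + \<gamma>) * (a * x + (\<gamma> * a - b)) \<ge> m * n * (x + \<gamma>)\<^sup>2"
    using x g by (simp add: power2_eq_square mult_left_mono mult.commute mult.left_commute)
  have t2: "a * y\<^sup>2 \<ge> m * n * y\<^sup>2"
    using ha mal n by (intro mult_right_mono) (auto intro: order_trans[OF mult_right_mono[OF mal n]])
  have aD: "a * D - b * (x + \<gamma>) \<ge> m * n * D"
    using e1 t1 t2 Ddef by (simp add: algebra_simps)
  have L: "(x * a - b * (x * (x + \<gamma>) - y\<^sup>2) / D) * D = x * (a * D - b * (x + \<gamma>)) + b * y\<^sup>2"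
    using D0 by (simp add: field_simps)
  have L2: "x * (a * D - b * (x + \<gamma>)) + b * y\<^sup>2 \<ge> m * n * x * D + \<beta> * n * y\<^sup>2"
  proof -
    have "x * (a * D - b * (x + \<gamma>)) \<ge> x * (m * n * D)" using aD x by (intro mult_left_mono) auto
    moreover have "b * y\<^sup>2 \<ge> \<beta> * n * y\<^sup>2" using hb by (intro mult_right_mono) auto
    ultimately show ?thesis by (simp add: algebra_simps)
  qed
  define r2 where "r2 = x\<^sup>2 + y\<^sup>2"
  have r0: "r2 \<ge> 0" using r2_def by simp
  have QD: "r2 / (1 + r2) * D \<le> x * D / 2 + 2 * K * y\<^sup>2"
  proof -
    have A1: "2 * x \<le> 1 + r2"
    proof -
      have "0 \<le> (x - 1)\<^sup>2 + y\<^sup>2" by simp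
      then show ?thesis unfolding r2_def by (simp add: power2_eq_square algebra_simps)
    qed
    have A: "x\<^sup>2 * D \<le> x * D / 2 * (1 + r2)"
    proof -
      have "x\<^sup>2 * D = (2 * x) * (x * D / 2)" by (simp add: power2_eq_square)
      also have "\<dots> \<le> (1 + r2) * (x * D / 2)" using A1 x D0 by (intro mult_right_mono) auto
      finally show ?thesis by (simp add: mult.commute)
    qed
    have B1: "D \<le> 2 * K * (1 + r2)"
    proof -
      have "D \<le> 2 * x\<^sup>2 + 2 * \<gamma>\<^sup>2 + y\<^sup>2"
      proof -
        have "0 \<le> (x - \<gamma>)\<^sup>2" by simp
        then show ?thesis unfolding Ddef by (simp add: power2_eq_square algebra_simps)
      qed
      also have "\<dots> \<le> 2 * K * x\<^sup>2 + 2 * K + 2 * K * y\<^sup>2"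
      proof -
        have h1: "x\<^sup>2 \<le> K * x\<^sup>2" using mult_right_mono[OF K1(1), of "x\<^sup>2"] by simp
        have h3: "y\<^sup>2 \<le> 2 * K * y\<^sup>2" using mult_right_mono[of 1 "2 * K" "y\<^sup>2"] K1 by simp
        show ?thesis using h1 h3 K1(2) by linarith
      qed
      finally show ?thesis unfolding r2_def by (simp add: algebra_simps)
    qed
    have B: "y\<^sup>2 * D \<le> 2 * K * y\<^sup>2 * (1 + r2)"
      using mult_left_mono[OF B1, of "y\<^sup>2"] by (simp add: algebra_simps)
    have "r2 * D \<le> (x * D / 2 + 2 * K * y\<^sup>2) * (1 + r2)"
      using A B unfolding r2_def by (simp add: algebra_simps)
    then show ?thesis using r0 by (simp add: field_simps)
  qed
  have "c * (x + r2 / (1 + r2)) * n * D = c * n * (x * D + r2 / (1 + r2) * D)"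
    by (simp add: algebra_simps)
  also have "\<dots> \<le> c * n * (x * D + (x * D / 2 + 2 * K * y\<^sup>2))"
    using QD c0 n by (intro mult_left_mono add_left_mono) auto
  also have "\<dots> = (3 / 2 * c) * n * x * D + (2 * K * c) * n * y\<^sup>2"
    by (simp add: algebra_simps)
  also have "\<dots> \<le> m * n * x * D + \<beta> * n * y\<^sup>2"
  proof (intro add_mono mult_right_mono)
    show "3 / 2 * c \<le> m" using c1 m0 by simp
    show "2 * K * c \<le> \<beta>" using c2 K1 by (simp add: field_simps)
  qed (use n x D0 in auto)
  also have "\<dots> \<le> (x * a - b * (x * (x + \<gamma>) - y\<^sup>2) / D) * D"
    using L L2 by simp
  finally have "c * (x + r2 / (1 + r2)) * n * D \<le> (x * a - b * (x * (x + \<gamma>) - y\<^sup>2) / D) * D" .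
  then show ?thesis using D0 unfolding r2_def by simp
qed

lemma im_ineq:
  fixes x y a b n \<beta> \<delta> \<gamma> c D :: real
  assumes x: "x > 0" and g: "\<gamma> > 0" and n: "n \<ge> 0" and hb: "b \<ge> 0" and hd: "\<gamma> * a - b \<ge> \<delta> * n"
    and c3: "c \<le> \<delta> / \<gamma>"
    and Ddef: "D = (x + \<gamma>)\<^sup>2 + y\<^sup>2"
  shows "(- y * a + b * y * (2 * x + \<gamma>) / D) * y \<le> - c * \<bar>y\<bar>\<^sup>2 * n"
proof -
  have D0: "D > 0" using Ddef x g by (simp add: add_pos_nonneg)
  have "\<gamma> * (2 * x + \<gamma>) \<le> D"
  proof -
    have "0 \<le> x\<^sup>2 + y\<^sup>2" by simp
    then show ?thesis unfolding Ddef by (simp add: power2_eq_square algebra_simps)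
  qed
  then have "(2 * x + \<gamma>) / D \<le> 1 / \<gamma>" using D0 g by (simp add: field_simps)
  then have "b * ((2 * x + \<gamma>) / D) \<le> b * (1 / \<gamma>)" using hb by (rule mult_left_mono)
  moreover have "c * n \<le> a - b / \<gamma>"
  proof -
    have "c * n \<le> \<delta> / \<gamma> * n" using c3 n by (rule mult_right_mono)
    also have "\<dots> \<le> (\<gamma> * a - b) / \<gamma>" using hd g by (simp add: field_simps)
    also have "\<dots> = a - b / \<gamma>" using g by (simp add: field_simps)
    finally show ?thesis .
  qed
  ultimately have k: "c * n \<le> a - b * (2 * x + \<gamma>) / D" by simp
  have "(- y * a + b * y * (2 * x + \<gamma>) / D) * y = - (y\<^sup>2 * (a - b * (2 * x + \<gamma>) / D))"
    by (simp add: power2_eq_square algebra_simps)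
  also have "\<dots> \<le> - (y\<^sup>2 * (c * n))"
    using k by (simp add: mult_left_mono)
  finally show ?thesis by (simp add: mult_ac)
qed



lemma P_re_im:
  fixes z :: complex and a b \<gamma> :: real
  assumes "Re z > 0" "\<gamma> > 0"
  shows "Re (cnj z * of_real a + (- 1 / (z + of_real \<gamma>)) * (cnj z * of_real b))
           = Re z * a - b * (Re z * (Re z + \<gamma>) - (Im z)\<^sup>2) / ((Re z + \<gamma>)\<^sup>2 + (Im z)\<^sup>2)"
    and "Im (cnj z * of_real a + (- 1 / (z + of_real \<gamma>)) * (cnj z * of_real b))
           = - Im z * a + b * Im z * (2 * Re z + \<gamma>) / ((Re z + \<gamma>)\<^sup>2 + (Im z)\<^sup>2)"
proof -
  have e: "(- 1 / (z + of_real \<gamma>)) * (cnj z * of_real b) = - ((cnj z * of_real b) / (z + of_real \<gamma>))"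
    by simp
  have c: "(cmod (z + of_real \<gamma>))\<^sup>2 = (Re z + \<gamma>)\<^sup>2 + (Im z)\<^sup>2"
    by (simp add: cmod_power2)
  show "Re (cnj z * of_real a + (- 1 / (z + of_real \<gamma>)) * (cnj z * of_real b))
           = Re z * a - b * (Re z * (Re z + \<gamma>) - (Im z)\<^sup>2) / ((Re z + \<gamma>)\<^sup>2 + (Im z)\<^sup>2)"
    unfolding e by (simp add: Re_divide c power2_eq_square algebra_simps diff_divide_distrib)
  show "Im (cnj z * of_real a + (- 1 / (z + of_real \<gamma>)) * (cnj z * of_real b))
           = - Im z * a + b * Im z * (2 * Re z + \<gamma>) / ((Re z + \<gamma>)\<^sup>2 + (Im z)\<^sup>2)"
    unfolding e by (simp add: Im_divide c power2_eq_square algebra_simps add_divide_distrib diff_divide_distrib)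
qed


theorem proposition4p5:
  fixes A B :: "real^'n::finite^'n \<Rightarrow> real^'n^'n" and \<gamma> :: real
  assumes "is_tensor A" and "sym_tensor A" and "positive_tensor A"
    and "is_tensor B" and "sym_tensor B" and "positive_tensor B"
    and "\<gamma> > 0"
    and "positive_tensor (\<lambda>X. \<gamma> *\<^sub>R A X - B X)"
  shows "\<exists>c>0. \<forall>z::complex. Re z > 0 \<longrightarrow> (\<forall>\<xi>::complex^'n^'n. sym_mat \<xi> \<longrightarrow>
      (let S = (\<lambda>t X. - (exp (- \<gamma> * t) *\<^sub>R B X));
           P = (cext A \<xi> + laplace_tensor S z \<xi>) ::: mcnj (mscale z \<xi>)
       in Re P \<ge> c * (Re z + (cmod z)\<^sup>2 / (1 + (cmod z)\<^sup>2)) * (norm \<xi>)\<^sup>2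
        \<and> Im P * Im z \<le> - c * \<bar>Im z\<bar>\<^sup>2 * (norm \<xi>)\<^sup>2))"
proof -
  note g = \<open>\<gamma> > 0\<close>
  have linA: "linear A" and linB: "linear B"
    using assms(1,4) by (auto simp: is_tensor_def)
  have linG: "linear (\<lambda>X. \<gamma> *\<^sub>R A X - B X)"
    by (rule linearI) (simp_all add: linear_add[OF linA] linear_add[OF linB]
        linear_cmul[OF linA] linear_cmul[OF linB] algebra_simps)
  obtain \<alpha> where al: "\<alpha> > 0" and hA: "\<And>X. sym_mat X \<Longrightarrow> \<alpha> * (norm X)\<^sup>2 \<le> inner (A X) X"
    using coercive[OF linA assms(3)] by blast
  obtain \<beta> where be: "\<beta> > 0" and hB: "\<And>X. sym_mat X \<Longrightarrow> \<beta> * (norm X)\<^sup>2 \<le> inner (B X) X"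
    using coercive[OF linB assms(6)] by blast
  obtain \<delta> where de: "\<delta> > 0" and hG: "\<And>X. sym_mat X \<Longrightarrow> \<delta> * (norm X)\<^sup>2 \<le> inner (\<gamma> *\<^sub>R A X - B X) X"
    using coercive[OF linG assms(8)] by blast
  define m where "m = min \<alpha> (\<delta> / \<gamma>)"
  define K where "K = max 1 (\<gamma>\<^sup>2)"
  define c where "c = min (m / 2) (min (\<beta> / (2 * K)) (\<delta> / \<gamma>))"
  have K1: "K \<ge> 1" unfolding K_def by simp
  have c0: "c > 0" unfolding c_def m_def using al be de g K1 by auto
  have c1: "c \<le> m / 2" and c2: "c \<le> \<beta> / (2 * K)" and c3: "c \<le> \<delta> / \<gamma>"
    unfolding c_def by (simp_all only: min.cobounded1 min.cobounded2 min.coboundedI2)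
  show ?thesis
  proof (intro exI[of _ c] conjI c0 allI impI)
    fix z :: complex and \<xi> :: "complex^'n^'n"
    assume z: "Re z > 0" and s: "sym_mat \<xi>"
    define X where "X = mRe \<xi>"
    define Y where "Y = mIm \<xi>"
    have sX: "sym_mat X" and sY: "sym_mat Y" using s sym_mRe sym_mIm X_def Y_def by auto
    define a where "a = inner (A X) X + inner (A Y) Y"
    define b where "b = inner (B X) X + inner (B Y) Y"
    define n where "n = (norm \<xi>)\<^sup>2"
    have nXY: "n = (norm X)\<^sup>2 + (norm Y)\<^sup>2" unfolding n_def X_def Y_def by (rule norm_cmat)
    have n0: "n \<ge> 0" unfolding n_def by simp
    have ha: "a \<ge> \<alpha> * n" unfolding a_def nXY using hA[OF sX] hA[OF sY] by (simp add: distrib_left)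
    have hb: "b \<ge> \<beta> * n" unfolding b_def nXY using hB[OF sX] hB[OF sY] by (simp add: distrib_left)
    have hd: "\<gamma> * a - b \<ge> \<delta> * n" unfolding a_def b_def nXY using hG[OF sX] hG[OF sY]
      by (simp add: distrib_left inner_diff_left algebra_simps)
    have b0: "b \<ge> 0" using hb be n0 by (meson mult_nonneg_nonneg less_imp_le order_trans)
    let ?S = "\<lambda>t X. - (exp (- \<gamma> * t) *\<^sub>R B X)"
    have Pe: "(cext A \<xi> + laplace_tensor ?S z \<xi>) ::: mcnj (mscale z \<xi>)
        = cnj z * of_real a + (- 1 / (z + of_real \<gamma>)) * (cnj z * of_real b)"
      unfolding ddot_add laplace_eq[OF z g] ddot_scale ddot_mscale cform[OF assms(2) s] cform[OF assms(5) s]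
        a_def b_def X_def Y_def by (simp add: ring_distribs mult_ac)
    define D where "D = (Re z + \<gamma>)\<^sup>2 + (Im z)\<^sup>2"
    have r: "Re z * a - b * (Re z * (Re z + \<gamma>) - (Im z)\<^sup>2) / D \<ge> c * (Re z + (cmod z)\<^sup>2 / (1 + (cmod z)\<^sup>2)) * n"
      unfolding cmod_power2
      by (rule re_ineq[OF z g al be de n0 ha hb hd m_def K_def c1 c2 c0 D_def])
    have i: "(- Im z * a + b * Im z * (2 * Re z + \<gamma>) / D) * Im z \<le> - c * \<bar>Im z\<bar>\<^sup>2 * n"
      by (rule im_ineq[OF z g n0 b0 hd c3 D_def])
    show "let S = ?S; P = (cext A \<xi> + laplace_tensor S z \<xi>) ::: mcnj (mscale z \<xi>)
       in Re P \<ge> c * (Re z + (cmod z)\<^sup>2 / (1 + (cmod z)\<^sup>2)) * (norm \<xi>)\<^sup>2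
        \<and> Im P * Im z \<le> - c * \<bar>Im z\<bar>\<^sup>2 * (norm \<xi>)\<^sup>2"
      unfolding Let_def Pe P_re_im[OF z g] using r i unfolding D_def n_def by simp
  qed
qed

end
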